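(* Let $0<\varepsilon\le1/2$, let $X\subset\mathbb{R}^d$ be a finite nonempty (multi)set with $n=|X|$, and $C\subset\mathbb{R}^d$ a finite nonempty set. For $x\in X$ let $c(x)\in C$ be a nearest point of $C$ to $x$. Define $R^2=\frac{\varepsilon^2}{41}\cdot\frac{\Phi(C,X)}{n}$, $X^{near}=\{x\in X:\|x-c(x)\|\le R\}$, $X^{far}=X\setminus X^{near}$, and the multiset $X' = X^{far}\cup\{c(x):x\in X^{near}\}$. If $m''\in\mathbb{R}^d$ satisfies $\Phi(m'',X')\le(1+\frac{\varepsilon}{16})\Delta(X')$, then $\Phi(m'',X)\le(1+\frac\varepsilon2)\Delta(X)$.
   Context: $\mu(Y)$ denotes the centroid of a finite multiset $Y$, $\Delta(Y)=\sum_{y\in Y}\|y-\mu(Y)\|^2$. For a point $p$, $\Phi(p,Y)=\sum_{y\in Y}\|y-p\|^2$; for a finite set $C$, $\Phi(C,Y)=\sum_{y\in Y}\min_{c\in C}\|y-c\|^2$. *)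

theory Defs
  imports "HOL-Analysis.Analysis" "HOL-Library.Multiset"
begin

definition centroid :: "'a::real_vector multiset \<Rightarrow> 'a" where
  "centroid Y = scaleR (1 / real (size Y)) (sum_mset Y)"

definition Delta :: "'a::real_normed_vector multiset \<Rightarrow> real" where
  "Delta Y = sum_mset (image_mset (\<lambda>y. (norm (y - centroid Y))\<^sup>2) Y)"

definition Phi :: "'a::real_normed_vector \<Rightarrow> 'a multiset \<Rightarrow> real" where
  "Phi p Y = sum_mset (image_mset (\<lambda>y. (norm (y - p))\<^sup>2) Y)"

definition PhiC :: "'a::real_normed_vector set \<Rightarrow> 'a multiset \<Rightarrow> real" where
  "PhiC C Y = sum_mset (image_mset (\<lambda>y. Min ((\<lambda>c. (norm (y - c))\<^sup>2) ` C)) Y)"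

end

theory Submission imports Defs begin

lemma sq2: fixes a b :: "'a::real_normed_vector"
  shows "(norm (a+b))\<^sup>2 \<le> 2*(norm a)\<^sup>2 + 2*(norm b)\<^sup>2"
proof -
  have "norm (a+b) \<le> norm a + norm b" by (rule norm_triangle_ineq)
  hence "(norm (a+b))\<^sup>2 \<le> (norm a + norm b)\<^sup>2" by (simp add: power_mono)
  also have "\<dots> \<le> 2*(norm a)\<^sup>2 + 2*(norm b)\<^sup>2"
  proof -
    have "0 \<le> (norm a - norm b)\<^sup>2" by simp
    then show ?thesis by (simp add: power2_eq_square algebra_simps)
  qed
  finally show ?thesis .
qed

lemma sq3: fixes p q r :: real
  shows "(p+q+r)^2 \<le> 3*p^2 + 3*q^2 + 3*r^2"
proof -
  have "0 \<le> (p-q)^2 + (q-r)^2 + (p-r)^2" by simp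
  then show ?thesis by (simp add: power2_eq_square algebra_simps)
qed

lemma sum_mset_inner: "(\<Sum>y\<in>#Y. inner (f y) v) = inner (\<Sum>y\<in>#Y. f y) v"
  by (induction Y) (simp_all add: inner_add_left)

lemma sum_mset_minus_const: fixes f :: "'b \<Rightarrow> 'a::real_vector"
  shows "(\<Sum>y\<in>#Y. f y - c) = (\<Sum>y\<in>#Y. f y) - real (size Y) *\<^sub>R c"
  by (induction Y) (simp_all add: algebra_simps)

lemma sum_mset_add_fun: "(\<Sum>y\<in>#Y. f y + g y) = (\<Sum>y\<in>#Y. f y) + (\<Sum>y\<in>#Y. (g y::'a::comm_monoid_add))"
  by (induction Y) (simp_all add: algebra_simps)

lemma norm_sum_sq: fixes a b :: "'a::real_inner"
  shows "(norm (a + b))\<^sup>2 = (norm a)\<^sup>2 + 2 * inner a b + (norm b)\<^sup>2"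
  by (simp add: power2_norm_eq_inner inner_add_left inner_add_right inner_commute)

lemma L1: fixes Y :: "'a::euclidean_space multiset"
  shows "Phi p Y = Delta Y + real (size Y) * (norm (p - centroid Y))\<^sup>2"
proof (cases "Y = {#}")
  case True then show ?thesis by (simp add: Phi_def Delta_def)
next
  case False
  define mu where "mu = centroid Y"
  have n0: "real (size Y) > 0" using False by (simp add: nonempty_has_size)
  have s0: "(\<Sum>y\<in>#Y. y - mu) = 0"
    using n0 by (simp add: sum_mset_minus_const mu_def centroid_def)
  have e: "(norm (y - p))\<^sup>2 = (norm (y - mu))\<^sup>2 + 2 * inner (y - mu) (mu - p) + (norm (mu - p))\<^sup>2" for y
    using norm_sum_sq[of "y - mu" "mu - p"] by simp
  have "Phi p Y = (\<Sum>y\<in>#Y. (norm (y - mu))\<^sup>2 + 2 * inner (y - mu) (mu - p) + (norm (mu - p))\<^sup>2)"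
    unfolding Phi_def by (rule arg_cong[where f=sum_mset], rule image_mset_cong, rule e)
  also have "\<dots> = (\<Sum>y\<in>#Y. (norm (y - mu))\<^sup>2) + (\<Sum>y\<in>#Y. 2 * inner (y - mu) (mu - p)) + (\<Sum>y\<in>#Y. (norm (mu - p))\<^sup>2)"
    by (simp only: sum_mset_add_fun)
  also have "(\<Sum>y\<in>#Y. 2 * inner (y - mu) (mu - p)) = 2 * inner (\<Sum>y\<in>#Y. y - mu) (mu - p)"
    by (simp only: sum_mset_distrib_left[symmetric] sum_mset_inner)
  also have "(\<Sum>y\<in>#Y. (norm (y - mu))\<^sup>2) = Delta Y" by (simp only: Delta_def mu_def)
  also have "(\<Sum>y\<in>#Y. (norm (mu - p))\<^sup>2) = real (size Y) * (norm (p - centroid Y))\<^sup>2"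
    by (simp add: mu_def norm_minus_commute)
  finally show ?thesis by (simp add: s0)
qed

lemma Delta_le: fixes Y :: "'a::euclidean_space multiset"
  shows "Delta Y \<le> Phi p Y"
  by (simp add: L1)

lemma sum_mset_nonneg': "(\<And>y. (0::real) \<le> f y) \<Longrightarrow> 0 \<le> (\<Sum>y\<in>#Y. f y)"
  by (induction Y) (auto simp: add_nonneg_nonneg)

lemma Delta_nonneg: "Delta Y \<ge> 0"
  unfolding Delta_def by (rule sum_mset_nonneg') simp

lemma CS: fixes f :: "'b \<Rightarrow> 'a::euclidean_space"
  shows "(norm (\<Sum>y\<in>#V. f y))\<^sup>2 \<le> real (size V) * (\<Sum>y\<in>#V. (norm (f y))\<^sup>2)"
proof (cases "V = {#}")
  case True then show ?thesis by simp
next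
  case False
  define W where "W = image_mset f V"
  have n0: "real (size W) > 0" using False by (simp add: W_def nonempty_has_size)
  have "Phi 0 W = Delta W + real (size W) * (norm (0 - centroid W))\<^sup>2" by (rule L1)
  hence "real (size W) * (norm (centroid W))\<^sup>2 \<le> Phi 0 W" using Delta_nonneg[of W] by simp
  moreover have "real (size W) * (norm (centroid W))\<^sup>2 = (norm (sum_mset W))\<^sup>2 / real (size W)"
    using n0 by (simp add: centroid_def power2_eq_square)
  ultimately have "(norm (sum_mset W))\<^sup>2 \<le> real (size W) * Phi 0 W"
    using n0 by (simp add: divide_le_eq mult.commute)
  then show ?thesis by (simp add: W_def Phi_def image_mset.compositionality o_def)
qed


lemma sum_mset_diff_fun: fixes f g :: "'b \<Rightarrow> 'a::ab_group_add"
  shows "(\<Sum>y\<in>#Y. f y - g y) = (\<Sum>y\<in>#Y. f y) - (\<Sum>y\<in>#Y. g y)"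
  by (induction Y) (simp_all add: algebra_simps)

lemma split_sum: "(\<Sum>x\<in>#X. f x) = (\<Sum>x\<in>#filter_mset P X. f x) + (\<Sum>x\<in>#filter_mset (\<lambda>x. \<not> P x) X. (f x :: 'b::comm_monoid_add))"
proof -
  have eq: "X = filter_mset P X + filter_mset (\<lambda>x. \<not> P x) X" by (rule multiset_partition)
  have h: "(\<Sum>x\<in>#A+B. f x) = (\<Sum>x\<in>#A. f x) + (\<Sum>x\<in>#B. f x)" for A B by simp
  show ?thesis by (subst (1) eq) (rule h)
qed

lemma sum_mset_le_const: fixes f :: "'b \<Rightarrow> real"
  assumes "\<And>x. x \<in># Y \<Longrightarrow> f x \<le> c"
  shows "(\<Sum>x\<in>#Y. f x) \<le> real (size Y) * c"
proof -
  have "(\<Sum>x\<in>#Y. f x) \<le> (\<Sum>x\<in>#Y. c)" by (rule sum_mset_mono) (rule assms)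
  then show ?thesis by simp
qed

lemma sum_mset_ge_const: fixes f :: "'b \<Rightarrow> real"
  assumes "\<And>x. x \<in># Y \<Longrightarrow> c \<le> f x"
  shows "real (size Y) * c \<le> (\<Sum>x\<in>#Y. f x)"
proof -
  have "(\<Sum>x\<in>#Y. c) \<le> (\<Sum>x\<in>#Y. f x)" by (rule sum_mset_mono) (rule assms)
  then show ?thesis by simp
qed

theorem mainTheorem12:
  fixes X :: "'a::euclidean_space multiset" and C :: "'a set"
    and cx :: "'a \<Rightarrow> 'a" and eps :: real and m'' :: 'a
  assumes "0 < eps" and "eps \<le> 1/2"
    and "X \<noteq> {#}"
    and "finite C" and "C \<noteq> {}"
    and "\<forall>x\<in>#X. cx x \<in> C \<and> (\<forall>c\<in>C. norm (x - cx x) \<le> norm (x - c))"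
  defines "R \<equiv> sqrt (eps\<^sup>2 / 41 * (PhiC C X / real (size X)))"
  defines "X' \<equiv> filter_mset (\<lambda>x. \<not> norm (x - cx x) \<le> R) X
                 + image_mset cx (filter_mset (\<lambda>x. norm (x - cx x) \<le> R) X)"
  assumes "Phi m'' X' \<le> (1 + eps / 16) * Delta X'"
  shows "Phi m'' X \<le> (1 + eps / 2) * Delta X"
proof -
  note cxC = assms(6)
  define P where "P x \<longleftrightarrow> norm (x - cx x) \<le> R" for x
  define Xn where "Xn = filter_mset P X"
  define Xf where "Xf = filter_mset (\<lambda>x. \<not> P x) X"
  have X'eq: "X' = Xf + image_mset cx Xn" unfolding X'_def Xn_def Xf_def P_def by simp
  define n where "n = real (size X)"
  define N where "N = real (size Xn)"
  define F where "F = real (size Xf)"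
  have XnXf: "X = Xn + Xf" unfolding Xn_def Xf_def by (rule multiset_partition)
  have nNF: "n = N + F" unfolding n_def N_def F_def by (subst XnXf) simp
  have n0: "n > 0" using assms(3) by (simp add: n_def nonempty_has_size)
  have N0: "N \<ge> 0" "F \<ge> 0" by (simp_all add: N_def F_def)
  have NX: "\<And>x. x \<in># Xn \<Longrightarrow> x \<in># X \<and> P x" by (simp add: Xn_def)
  have FX: "\<And>x. x \<in># Xf \<Longrightarrow> x \<in># X \<and> \<not> P x" by (simp add: Xf_def)
  have sumsplit: "\<And>f. (\<Sum>x\<in>#X. f x) = (\<Sum>x\<in>#Xn. f x) + (\<Sum>x\<in>#Xf. (f x :: real))"
    unfolding Xn_def Xf_def by (rule split_sum)
  define mu where "mu = centroid X"
  define Dl where "Dl = Delta X"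
  define An where "An = (\<Sum>x\<in>#Xn. (norm (x - mu))\<^sup>2)"
  define Af where "Af = (\<Sum>x\<in>#Xf. (norm (x - mu))\<^sup>2)"
  have Dlsplit: "Dl = An + Af" unfolding Dl_def Delta_def An_def Af_def mu_def by (rule sumsplit)
  have An0: "An \<ge> 0" unfolding An_def by (rule sum_mset_nonneg') simp
  have Af0: "Af \<ge> 0" unfolding Af_def by (rule sum_mset_nonneg') simp
  define Q where "Q = PhiC C X"
  have Qeq: "Q = (\<Sum>x\<in>#X. (norm (x - cx x))\<^sup>2)"
    unfolding Q_def PhiC_def
  proof (rule arg_cong[where f=sum_mset], rule image_mset_cong)
    fix x assume "x \<in># X"
    then have "cx x \<in> C" "\<forall>c\<in>C. norm (x - cx x) \<le> norm (x - c)" using cxC by auto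
    then show "Min ((\<lambda>c. (norm (x - c))\<^sup>2) ` C) = (norm (x - cx x))\<^sup>2"
      using assms(4) by (intro Min_eqI) (auto intro: power_mono)
  qed
  define Qn where "Qn = (\<Sum>x\<in>#Xn. (norm (x - cx x))\<^sup>2)"
  define Qf where "Qf = (\<Sum>x\<in>#Xf. (norm (x - cx x))\<^sup>2)"
  have Qsplit: "Q = Qn + Qf" unfolding Qeq Qn_def Qf_def by (rule sumsplit)
  have Q0: "Q \<ge> 0" unfolding Qeq by (rule sum_mset_nonneg') simp
  have R0: "R \<ge> 0" by (simp add: R_def Q_def[symmetric] n_def[symmetric] Q0 n0 less_imp_le)
  have R2: "R\<^sup>2 = eps\<^sup>2 / 41 * (Q / n)"
  proof -
    have "0 \<le> eps\<^sup>2 / 41 * (Q / n)" using Q0 n0 by simp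
    moreover have "R = sqrt (eps\<^sup>2 / 41 * (Q / n))" by (simp add: R_def Q_def n_def)
    ultimately show ?thesis by simp
  qed
  have Req: "Q * eps\<^sup>2 = 41 * n * R\<^sup>2" using R2 n0 by (simp add: field_simps)
  define D where "D = (\<Sum>x\<in>#Xn. (norm (cx x - x))\<^sup>2)"
  have D_le: "D \<le> N * R\<^sup>2" unfolding D_def N_def
  proof (rule sum_mset_le_const)
    fix x assume "x \<in># Xn"
    then have "norm (cx x - x) \<le> R" using NX by (simp add: P_def norm_minus_commute)
    then show "(norm (cx x - x))\<^sup>2 \<le> R\<^sup>2" by (simp add: power_mono)
  qed
  have Qn_le: "Qn \<le> N * R\<^sup>2" unfolding Qn_def N_def
  proof (rule sum_mset_le_const)
    fix x assume "x \<in># Xn"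
    then have "norm (x - cx x) \<le> R" using NX by (simp add: P_def)
    then show "(norm (x - cx x))\<^sup>2 \<le> R\<^sup>2" by (simp add: power_mono)
  qed
  have K: "40 * (N * R\<^sup>2) \<le> 3 * eps\<^sup>2 * Dl"
  proof (cases "Xn = {#}")
    case True
    then have "N = 0" by (simp add: N_def)
    then show ?thesis using Dlsplit An0 Af0 by simp
  next
    case False
    define S where "S = set_mset Xn"
    have Sf: "finite S" "S \<noteq> {}" using False by (simp_all add: S_def)
    define m where "m = Min ((\<lambda>x. norm (x - mu)) ` S)"
    have "m \<in> (\<lambda>x. norm (x - mu)) ` S" unfolding m_def using Sf by (intro Min_in) auto
    then obtain x0 where x0: "x0 \<in> S" "norm (x0 - mu) = m" by auto
    have mle: "\<And>y. y \<in># Xn \<Longrightarrow> m \<le> norm (y - mu)"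
      unfolding m_def S_def using Sf(1) unfolding S_def by (intro Min_le) auto
    define a where "a = norm (x0 - mu)"
    have a0: "a \<ge> 0" by (simp add: a_def)
    have Na: "N * a\<^sup>2 \<le> An" unfolding N_def An_def
    proof (rule sum_mset_ge_const)
      fix y assume "y \<in># Xn"
      then have "a \<le> norm (y - mu)" using mle x0 a_def by simp
      then show "a\<^sup>2 \<le> (norm (y - mu))\<^sup>2" using a0 by (simp add: power_mono)
    qed
    have x0X: "x0 \<in># X" "P x0" using NX x0(1) by (auto simp: S_def)
    have cx0: "cx x0 \<in> C" using cxC x0X by auto
    have dx0: "norm (x0 - cx x0) \<le> R" using x0X by (simp add: P_def)
    have Qf_le: "Qf \<le> (\<Sum>x\<in>#Xf. 3 * (norm (x - mu))\<^sup>2 + (3 * a\<^sup>2 + 3 * R\<^sup>2))"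
      unfolding Qf_def
    proof (rule sum_mset_mono)
      fix x assume "x \<in># Xf"
      then have xX: "x \<in># X" using FX by simp
      have "norm (x - cx x) \<le> norm (x - cx x0)" using cxC xX cx0 by auto
      also have "norm (x - cx x0) \<le> norm (x - mu) + norm (mu - x0) + norm (x0 - cx x0)"
      proof -
        have eq: "x - cx x0 = (x - mu) + ((mu - x0) + (x0 - cx x0))" by simp
        have "norm ((x - mu) + ((mu - x0) + (x0 - cx x0))) \<le> norm (x - mu) + norm ((mu - x0) + (x0 - cx x0))"
          by (rule norm_triangle_ineq)
        also have "\<dots> \<le> norm (x - mu) + (norm (mu - x0) + norm (x0 - cx x0))"
          by (intro add_left_mono norm_triangle_ineq)
        finally show ?thesis unfolding eq by simp
      qed
      also have "\<dots> \<le> norm (x - mu) + a + R" using dx0 by (simp add: a_def norm_minus_commute)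
      finally have "(norm (x - cx x))\<^sup>2 \<le> (norm (x - mu) + a + R)\<^sup>2" by (simp add: power_mono)
      also have "\<dots> \<le> 3 * (norm (x - mu))\<^sup>2 + 3 * a\<^sup>2 + 3 * R\<^sup>2" by (rule sq3)
      finally show "(norm (x - cx x))\<^sup>2 \<le> 3 * (norm (x - mu))\<^sup>2 + (3 * a\<^sup>2 + 3 * R\<^sup>2)" by simp
    qed
    also have "\<dots> = 3 * Af + F * (3 * a\<^sup>2 + 3 * R\<^sup>2)"
      by (simp add: sum_mset_add_fun sum_mset_distrib_left[symmetric] Af_def F_def)
    finally have Qf_le': "Qf \<le> 3 * Af + F * (3 * a\<^sup>2 + 3 * R\<^sup>2)" .
    have "N * Q \<le> N * (N * R\<^sup>2) + N * (3 * Af + F * (3 * a\<^sup>2 + 3 * R\<^sup>2))"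
    proof -
      have "N * Qn \<le> N * (N * R\<^sup>2)" using Qn_le N0(1) by (rule mult_left_mono)
      moreover have "N * Qf \<le> N * (3 * Af + F * (3 * a\<^sup>2 + 3 * R\<^sup>2))" using Qf_le' N0(1) by (rule mult_left_mono)
      moreover have "N * Q = N * Qn + N * Qf" using Qsplit by (simp add: algebra_simps)
      ultimately show ?thesis by linarith
    qed
    also have "\<dots> = N * N * R\<^sup>2 + 3 * (N * Af) + 3 * (F * (N * a\<^sup>2)) + 3 * (N * F * R\<^sup>2)"
      by (simp add: algebra_simps)
    also have "\<dots> \<le> n * N * R\<^sup>2 + 3 * (n * Af) + 3 * (n * An) + 3 * (n * N * R\<^sup>2)"
    proof -
      have "N * N * R\<^sup>2 \<le> n * N * R\<^sup>2" using nNF N0 by (intro mult_right_mono) auto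
      moreover have "N * Af \<le> n * Af" using nNF N0 Af0 by (intro mult_right_mono) auto
      moreover have "F * (N * a\<^sup>2) \<le> n * An"
      proof -
        have "F * (N * a\<^sup>2) \<le> F * An" using Na N0(2) by (rule mult_left_mono)
        also have "\<dots> \<le> n * An" using nNF N0 An0 by (intro mult_right_mono) auto
        finally show ?thesis .
      qed
      moreover have "N * F * R\<^sup>2 \<le> n * N * R\<^sup>2"
      proof -
        have "F * (N * R\<^sup>2) \<le> n * (N * R\<^sup>2)" using nNF N0 by (intro mult_right_mono) auto
        then show ?thesis by (simp add: algebra_simps)
      qed
      ultimately show ?thesis by linarith
    qed
    also have "\<dots> = n * (4 * (N * R\<^sup>2) + 3 * Dl)" using Dlsplit by (simp add: algebra_simps)
    finally have A: "N * Q \<le> n * (4 * (N * R\<^sup>2) + 3 * Dl)" .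
    have "n * (41 * (N * R\<^sup>2)) = eps\<^sup>2 * (N * Q)" using Req by (simp add: algebra_simps)
    also have "\<dots> \<le> eps\<^sup>2 * (n * (4 * (N * R\<^sup>2) + 3 * Dl))" using A by (simp add: mult_left_mono)
    also have "\<dots> = n * (eps\<^sup>2 * (4 * (N * R\<^sup>2) + 3 * Dl))" by (simp add: algebra_simps)
    finally have B: "41 * (N * R\<^sup>2) \<le> eps\<^sup>2 * (4 * (N * R\<^sup>2) + 3 * Dl)"
      using n0 by (simp only: mult_le_cancel_left_pos)
    have e2: "eps\<^sup>2 \<le> 1/4" 
    proof -
      have "eps\<^sup>2 \<le> (1/2)\<^sup>2" using assms(1,2) by (intro power_mono) auto
      then show ?thesis by (simp add: power2_eq_square)
    qed
    have NR0: "N * R\<^sup>2 \<ge> 0" using N0 by simp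
    have "eps\<^sup>2 * (4 * (N * R\<^sup>2)) \<le> 1/4 * (4 * (N * R\<^sup>2))" using e2 NR0 by (intro mult_right_mono) auto
    then show ?thesis using B by (simp add: algebra_simps)
  qed
  have Dl0: "Dl \<ge> 0" unfolding Dl_def by (rule Delta_nonneg)
  have D0: "D \<ge> 0" unfolding D_def by (rule sum_mset_nonneg') simp
  have DK: "40 * D \<le> 3 * eps\<^sup>2 * Dl" using D_le K by linarith
  define mu' where "mu' = centroid X'"
  define Dl' where "Dl' = Delta X'"
  have sX': "real (size X') = n" unfolding n_def by (simp add: X'eq XnXf)
  have hyp: "Phi m'' X' \<le> (1 + eps / 16) * Delta X'" by fact
  have a: "n * (norm (m'' - mu'))\<^sup>2 \<le> eps / 16 * Dl'"
    using L1[of m'' X'] hyp unfolding sX' mu'_def Dl'_def by (simp add: algebra_simps)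
  have PX': "Phi mu X' = Af + (\<Sum>x\<in>#Xn. (norm (cx x - mu))\<^sup>2)"
    unfolding Phi_def Af_def X'eq by (simp add: image_mset.compositionality o_def)
  have "(\<Sum>x\<in>#Xn. (norm (cx x - mu))\<^sup>2) \<le> (\<Sum>x\<in>#Xn. 2 * (norm (x - mu))\<^sup>2 + 2 * (norm (cx x - x))\<^sup>2)"
  proof (rule sum_mset_mono)
    fix x
    have "cx x - mu = (x - mu) + (cx x - x)" by simp
    then show "(norm (cx x - mu))\<^sup>2 \<le> 2 * (norm (x - mu))\<^sup>2 + 2 * (norm (cx x - x))\<^sup>2"
      using sq2[of "x - mu" "cx x - x"] by simp
  qed
  also have "\<dots> = 2 * An + 2 * D"
    by (simp add: sum_mset_add_fun sum_mset_distrib_left[symmetric] An_def D_def)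
  finally have "Phi mu X' \<le> Af + 2 * An + 2 * D" using PX' by simp
  then have b: "Dl' \<le> 2 * Dl + 2 * D" using Delta_le[of X' mu] Dlsplit Af0 unfolding Dl'_def by linarith
  define Sv where "Sv = (\<Sum>x\<in>#Xn. cx x - x)"
  have sumX: "sum_mset X = sum_mset Xn + sum_mset Xf" by (subst XnXf) simp
  have sumX': "sum_mset X' = sum_mset Xf + (\<Sum>x\<in>#Xn. cx x)" by (simp add: X'eq)
  have Sveq: "Sv = sum_mset X' - sum_mset X"
    unfolding Sv_def sum_mset_diff_fun sumX sumX' by simp
  have mudiff: "mu' - mu = (1 / n) *\<^sub>R Sv"
    unfolding mu'_def mu_def centroid_def Sveq sX' by (simp add: n_def algebra_simps)
  have CSv: "(norm Sv)\<^sup>2 \<le> N * D" unfolding Sv_def N_def D_def by (rule CS)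
  have "N * D \<le> n * D" using nNF N0 D0 by (intro mult_right_mono) auto
  with CSv have Svn: "(norm Sv)\<^sup>2 \<le> n * D" by linarith
  have c: "n * (norm (mu' - mu))\<^sup>2 \<le> D"
  proof -
    have "n * (norm (mu' - mu))\<^sup>2 = (norm Sv)\<^sup>2 / n"
      using n0 unfolding mudiff by (simp add: power2_eq_square)
    also have "\<dots> \<le> n * D / n" using Svn n0 by (intro divide_right_mono) auto
    also have "\<dots> = D" using n0 by simp
    finally show ?thesis .
  qed
  have d: "(norm (m'' - mu))\<^sup>2 \<le> 2 * (norm (m'' - mu'))\<^sup>2 + 2 * (norm (mu' - mu))\<^sup>2"
  proof -
    have "m'' - mu = (m'' - mu') + (mu' - mu)" by simp
    then show ?thesis using sq2[of "m'' - mu'" "mu' - mu"] by simp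
  qed
  have PX: "Phi m'' X = Dl + n * (norm (m'' - mu))\<^sup>2"
    using L1[of m'' X] unfolding Dl_def n_def mu_def .
  have "n * (norm (m'' - mu))\<^sup>2 \<le> n * (2 * (norm (m'' - mu'))\<^sup>2 + 2 * (norm (mu' - mu))\<^sup>2)"
    using d n0 by (intro mult_left_mono) auto
  also have "\<dots> = 2 * (n * (norm (m'' - mu'))\<^sup>2) + 2 * (n * (norm (mu' - mu))\<^sup>2)"
    by (simp add: algebra_simps)
  also have "\<dots> \<le> 2 * (eps / 16 * Dl') + 2 * D" using a c by linarith
  also have "\<dots> \<le> 2 * (eps / 16 * (2 * Dl + 2 * D)) + 2 * D"
    using b assms(1) by (intro add_right_mono mult_left_mono) auto
  also have "\<dots> = eps / 4 * Dl + (eps / 4 + 2) * D" by (simp add: algebra_simps)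
  also have "\<dots> \<le> eps / 2 * Dl"
  proof -
    have "(eps / 4 + 2) * D \<le> 3 * D" using assms(2) D0 by (intro mult_right_mono) auto
    moreover have "eps\<^sup>2 * Dl \<le> (eps / 2) * Dl"
    proof -
      have "eps * eps \<le> eps * (1/2)" using assms(1,2) by (intro mult_left_mono) auto
      then show ?thesis using Dl0 by (intro mult_right_mono) (auto simp: power2_eq_square)
    qed
    moreover have "eps * Dl \<ge> 0" using assms(1) Dl0 by simp
    moreover have "eps / 4 * Dl = (eps * Dl) / 4" "eps / 2 * Dl = (eps * Dl) / 2"
      "3 * eps\<^sup>2 * Dl = 3 * (eps\<^sup>2 * Dl)" "(eps / 2) * Dl = (eps * Dl) / 2" by simp_all
    ultimately show ?thesis using DK by linarith
  qed
  finally show ?thesis using PX unfolding Dl_def by (simp add: algebra_simps)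
qed

end
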